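(* Let $H<G$ be countable abelian groups such that every element of $G/H$ has odd order, and let $\pi:G\to G/H$ be the quotient map. Let $\{H=G_0<G_1<G_2<\cdots\}$ be a one-step ascending chain associated to $H$, with sequence of generators $\{g_i\}_{i\ge1}$ and (odd) indexes $m_i=[G_i:G_{i-1}]=2k_i+1$. Then every $g\in G$ can be written uniquely as \[g=h_g+\sum_{i=1}^{\infty}r_i g_i\] with $h_g\in H$, $r_i\in[-k_i,k_i]\cap\mathbb Z$, and $r_i=0$ for all $i$ larger than some $i_0$.
   Context: A one-step ascending chain of a countable locally finite group $Q$ is a chain $\{1\}=Q_0<Q_1<\cdots$ of subgroups with $Q=\bigcup_iQ_i$, together with elements $q_i$ such that $Q_i$ is generated by $q_1,\dots,q_i$ and $q_{i+1}\notin Q_i$. Given such a chain $\{Q_i\}$ of $G/H$ (which is locally finite) with generators $q_i$, the associated chain of $G$ is $G_i=\pi^{-1}(Q_i)$; a sequence of generators is any $g_i\in G$ with $\pi(g_i)=q_i$, and the indexes are $m_i=[G_i:G_{i-1}]=[Q_i:Q_{i-1}]$. *)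

theory Defs
  imports Main "HOL-Library.Countable"
begin

definition zmult :: "int \<Rightarrow> 'a::ab_group_add \<Rightarrow> 'a" where
  "zmult n x = (if 0 \<le> n then (\<Sum>_\<in>{..<nat n}. x) else - (\<Sum>_\<in>{..<nat (- n)}. x))"

definition subgroup_of :: "'a::ab_group_add set \<Rightarrow> bool" where
  "subgroup_of H \<longleftrightarrow> 0 \<in> H \<and> (\<forall>x\<in>H. \<forall>y\<in>H. x + y \<in> H) \<and> (\<forall>x\<in>H. - x \<in> H)"

definition cosets_in :: "'a::ab_group_add set \<Rightarrow> 'a set \<Rightarrow> 'a set set" where
  "cosets_in A B = (\<lambda>a. (\<lambda>b. a + b) ` B) ` A"

definition index_in :: "'a::ab_group_add set \<Rightarrow> 'a set \<Rightarrow> nat" where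
  "index_in A B = card (cosets_in A B)"

definition has_odd_order_mod :: "'a::ab_group_add set \<Rightarrow> 'a \<Rightarrow> bool" where
  "has_odd_order_mod H g \<longleftrightarrow>
     (\<exists>n::nat. n > 0 \<and> zmult (int n) g \<in> H) \<and>
     odd (LEAST n::nat. n > 0 \<and> zmult (int n) g \<in> H)"

text \<open>G_i = pi^{-1}(<q_1,...,q_i>) = H + <g_1,...,g_i> in the abelian setting.\<close>
definition chain_step :: "'a::ab_group_add set \<Rightarrow> (nat \<Rightarrow> 'a) \<Rightarrow> nat \<Rightarrow> 'a set" where
  "chain_step H g i = {h + (\<Sum>j\<in>{1..i}. zmult (c j) (g j)) | h c. h \<in> H}"

definition one_step_chain :: "'a::ab_group_add set \<Rightarrow> (nat \<Rightarrow> 'a) \<Rightarrow> bool" where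
  "one_step_chain H g \<longleftrightarrow>
     (\<forall>i. g (Suc i) \<notin> chain_step H g i) \<and> (\<Union>i. chain_step H g i) = UNIV"

definition chain_k :: "'a::ab_group_add set \<Rightarrow> (nat \<Rightarrow> 'a) \<Rightarrow> nat \<Rightarrow> nat" where
  "chain_k H g i = (index_in (chain_step H g i) (chain_step H g (i - 1)) - 1) div 2"

end

theory Submission imports Defs begin



lemma zmult_0[simp]: "zmult 0 x = 0" by (simp add: zmult_def)
lemma zmult_Suc: "zmult (int (Suc n)) x = zmult (int n) x + x"
proof -
  have "nat (int (Suc n)) = Suc n" by (simp only: nat_int)
  then show ?thesis unfolding zmult_def by (simp only: if_True of_nat_0_le_iff sum.lessThan_Suc nat_int)
qed
lemma zmult_Suc': "zmult (1 + int n) x = zmult (int n) x + x"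
  using zmult_Suc[of n x] by simp
lemma zmult_neg_nat: "zmult (- int n) x = - zmult (int n) x"
  by (cases n) (auto simp: zmult_def add.commute)
lemma zmult_neg: "zmult (-a) x = - zmult a x"
proof (cases "a \<ge> 0")
  case True then obtain n where "a = int n" using nonneg_int_cases by blast
  then show ?thesis by (simp add: zmult_neg_nat)
next
  case False then obtain n where "a = - int n" by (metis add.inverse_inverse neg_0_le_iff_le nle_le nonneg_int_cases)
  then show ?thesis by (simp add: zmult_neg_nat)
qed
lemma zmult_plus1: "zmult (a + 1) x = zmult a x + x"
proof (cases "a \<ge> 0")
  case True then obtain n where "a = int n" using nonneg_int_cases by blast
  then show ?thesis using zmult_Suc'[of n x] by (simp add: add.commute)
next
  case False then obtain n where a: "a = - int (Suc n)"
    by (metis int_cases2 int_ops(1) minus_int_code(1) neg_0_le_iff_le nat.exhaust of_nat_0_le_iff)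
  have "a + 1 = - int n" using a by simp
  then show ?thesis using a zmult_neg_nat[of n x] zmult_neg_nat[of "Suc n" x] zmult_Suc[of n x] by simp
qed
lemma zmult_minus1: "zmult (a - 1) x = zmult a x - x"
  using zmult_plus1[of "a - 1" x] by (simp add: algebra_simps)

lemma zmult_add: "zmult (a + b) x = zmult a x + zmult b x"
proof (induction b rule: int_induct[where k=0])
  case base then show ?case by simp
next
  case (step1 i)
  have eq: "a + (i + 1) = (a + i) + 1" by simp
  show ?case by (simp only: eq zmult_plus1 step1) (simp add: algebra_simps)
next
  case (step2 i)
  have eq: "a + (i - 1) = (a + i) - 1" by simp
  show ?case by (simp only: eq zmult_minus1 step2) (simp add: algebra_simps)
qed

lemma zmult_diff: "zmult (a - b) x = zmult a x - zmult b x"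
  using zmult_add[of a "-b" x] zmult_neg[of b x] by simp

lemma zmult_1[simp]: "zmult 1 x = x" using zmult_Suc[of 0 x] by simp

lemma zmult_mult: "zmult (a * b) x = zmult a (zmult b x)"
proof (induction a rule: int_induct[where k=0])
  case base then show ?case by simp
next
  case (step1 i) then show ?case using zmult_plus1[of i "zmult b x"]
    by (simp add: algebra_simps zmult_add)
next
  case (step2 i) then show ?case using zmult_minus1[of i "zmult b x"]
    by (simp add: algebra_simps zmult_diff)
qed

lemma sub_zmult: assumes "subgroup_of K" "x \<in> K" shows "zmult c x \<in> K"
proof -
  have n: "zmult (int n) x \<in> K" for n
    by (induction n) (use assms in \<open>auto simp: zmult_Suc' subgroup_of_def\<close>)
  show ?thesis
  proof (cases "c \<ge> 0")
    case True then show ?thesis using n by (metis nonneg_int_cases)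
  next
    case False then obtain n where "c = - int n" by (metis add.inverse_inverse neg_0_le_iff_le nle_le nonneg_int_cases)
    then show ?thesis using n[of n] assms(1) by (simp add: zmult_neg_nat subgroup_of_def)
  qed
qed

lemma sub_diff: "subgroup_of K \<Longrightarrow> x \<in> K \<Longrightarrow> y \<in> K \<Longrightarrow> x - y \<in> K"
  unfolding subgroup_of_def by (metis diff_conv_add_uminus)

lemma coset_eq: assumes "subgroup_of K" "a - b \<in> K"
  shows "(\<lambda>y. a + y) ` K = (\<lambda>y. b + y) ` K"
proof
  show "(\<lambda>y. a + y) ` K \<subseteq> (\<lambda>y. b + y) ` K"
  proof
    fix z assume "z \<in> (\<lambda>y. a + y) ` K"
    then obtain y where y: "y \<in> K" "z = a + y" by auto
    have "(a - b) + y \<in> K" using assms y unfolding subgroup_of_def by auto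
    moreover have "z = b + ((a - b) + y)" using y by simp
    ultimately show "z \<in> (\<lambda>y. b + y) ` K" by blast
  qed
next
  show "(\<lambda>y. b + y) ` K \<subseteq> (\<lambda>y. a + y) ` K"
  proof
    fix z assume "z \<in> (\<lambda>y. b + y) ` K"
    then obtain y where y: "y \<in> K" "z = b + y" by auto
    have "(b - a) + y \<in> K" using assms y unfolding subgroup_of_def
      by (metis minus_diff_eq)
    moreover have "z = a + ((b - a) + y)" using y by simp
    ultimately show "z \<in> (\<lambda>y. a + y) ` K" by blast
  qed
qed


lemma key:
  fixes K :: "'a::ab_group_add set"
  assumes K: "subgroup_of K" and n: "n > 0" "zmult (int n) a \<in> K"
  defines "m \<equiv> LEAST n::nat. n > 0 \<and> zmult (int n) a \<in> K"
  shows "m > 0" "zmult (int m) a \<in> K" "\<forall>c. zmult c a \<in> K \<longrightarrow> int m dvd c"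
    "m dvd n" "index_in {y + zmult c a | y c. y \<in> K} K = m"
proof -
  have ex: "\<exists>n. n > 0 \<and> zmult (int n) a \<in> K" using n by blast
  from LeastI_ex[OF ex] show m0: "m > 0" and mK: "zmult (int m) a \<in> K"
    unfolding m_def by auto
  have red: "zmult (c mod int m) a \<in> K" if "zmult c a \<in> K" for c
  proof -
    have "c mod int m = c - (c div int m) * int m" by (simp add: minus_div_mult_eq_mod)
    then have "zmult (c mod int m) a = zmult c a - zmult (c div int m) (zmult (int m) a)"
      by (simp add: zmult_diff zmult_mult)
    then show ?thesis using that sub_zmult[OF K mK] sub_diff[OF K] by simp
  qed
  show dv: "\<forall>c. zmult c a \<in> K \<longrightarrow> int m dvd c"
  proof (intro allI impI)
    fix c assume c: "zmult c a \<in> K"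
    have r: "zmult (int (nat (c mod int m))) a \<in> K" using red[OF c] m0 by simp
    have "nat (c mod int m) < m" using m0 by (simp add: nat_less_iff)
    then have "\<not> (nat (c mod int m) > 0 \<and> zmult (int (nat (c mod int m))) a \<in> K)"
      unfolding m_def using not_less_Least by blast
    with r have "nat (c mod int m) = 0" by simp
    moreover have "0 \<le> c mod int m" using m0 by simp
    ultimately have "c mod int m = 0" by linarith
    then show "int m dvd c" by presburger
  qed
  have "int m dvd int n" using dv n(2) by blast
  then show "m dvd n" by simp
  let ?A = "{y + zmult c a | y c. y \<in> K}"
  define f where "f r = (\<lambda>b. zmult (int r) a + b) ` K" for r
  have eq: "cosets_in ?A K = f ` {0..<m}"
  proof
    show "cosets_in ?A K \<subseteq> f ` {0..<m}"
    proof
      fix C assume "C \<in> cosets_in ?A K"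
      then obtain y c where y: "y \<in> K" and C: "C = (\<lambda>b. (y + zmult c a) + b) ` K"
        unfolding cosets_in_def by blast
      let ?r = "nat (c mod int m)"
      have ri: "int ?r = c mod int m" using m0 by simp
      have "?r < m" using m0 by (simp add: nat_less_iff)
      have "c - c mod int m = (c div int m) * int m" by (simp add: minus_mod_eq_div_mult)
      then have "zmult (c - c mod int m) a \<in> K"
        using sub_zmult[OF K mK] by (simp add: zmult_mult)
      then have "zmult c a - zmult (int ?r) a \<in> K" using ri by (simp add: zmult_diff)
      then have "y + (zmult c a - zmult (int ?r) a) \<in> K"
        using y K unfolding subgroup_of_def by blast
      then have "(y + zmult c a) - zmult (int ?r) a \<in> K" by (simp add: add_diff_eq)
      then have "C = f ?r" unfolding C f_def by (rule coset_eq[OF K])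
      then show "C \<in> f ` {0..<m}" using \<open>?r < m\<close> by auto
    qed
  next
    show "f ` {0..<m} \<subseteq> cosets_in ?A K"
    proof
      fix C assume "C \<in> f ` {0..<m}"
      then obtain r where "C = f r" by auto
      moreover have "0 + zmult (int r) a \<in> ?A" using K unfolding subgroup_of_def by blast
      ultimately show "C \<in> cosets_in ?A K" unfolding cosets_in_def f_def by auto
    qed
  qed
  have inj: "inj_on f {0..<m}"
  proof (rule inj_onI)
    fix r r' assume r: "r \<in> {0..<m}" "r' \<in> {0..<m}" and fe: "f r = f r'"
    have "zmult (int r) a + 0 \<in> f r" using K unfolding f_def subgroup_of_def by blast
    then have "zmult (int r) a \<in> f r'" using fe by simp
    then obtain b where b: "b \<in> K" "zmult (int r) a = zmult (int r') a + b" unfolding f_def by auto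
    then have "zmult (int r - int r') a \<in> K" by (simp add: zmult_diff)
    then have d: "int m dvd (int r - int r')" using dv by blast
    show "r = r'"
    proof (rule ccontr)
      assume "r \<noteq> r'"
      then have "\<bar>int m\<bar> \<le> \<bar>int r - int r'\<bar>" using dvd_imp_le_int[OF _ d] by simp
      then show False using r by auto
    qed
  qed
  show "index_in ?A K = m" unfolding index_in_def eq using card_image[OF inj] by simp
qed



lemma sub_ext: assumes K: "subgroup_of K"
  shows "subgroup_of {y + zmult c a | y c. y \<in> K}"
  unfolding subgroup_of_def
proof (intro conjI ballI)
  have "0 \<in> K" using K unfolding subgroup_of_def by blast
  moreover have "(0::'a) = 0 + zmult 0 a" by simp
  ultimately show "0 \<in> {y + zmult c a | y c. y \<in> K}" by blast
next
  fix x z assume "x \<in> {y + zmult c a | y c. y \<in> K}" "z \<in> {y + zmult c a | y c. y \<in> K}"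
  then obtain y c y' c' where yy: "y \<in> K" "y' \<in> K" "x = y + zmult c a" "z = y' + zmult c' a" by blast
  have "y + y' \<in> K" using K yy unfolding subgroup_of_def by blast
  moreover have "x + z = (y + y') + zmult (c + c') a" using yy by (simp add: zmult_add algebra_simps)
  ultimately show "x + z \<in> {y + zmult c a | y c. y \<in> K}" by blast
next
  fix x assume "x \<in> {y + zmult c a | y c. y \<in> K}"
  then obtain y c where yy: "y \<in> K" "x = y + zmult c a" by blast
  have "- y \<in> K" using K yy unfolding subgroup_of_def by blast
  moreover have "- x = (- y) + zmult (- c) a" using yy by (simp add: zmult_neg)
  ultimately show "- x \<in> {y + zmult c a | y c. y \<in> K}" by blast
qed
lemma chain_step_0: "chain_step H g 0 = H"
  unfolding chain_step_def by auto

lemma chain_step_Suc: "chain_step H g (Suc j) = {y + zmult c (g (Suc j)) | y c. y \<in> chain_step H g j}"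
proof
  show "chain_step H g (Suc j) \<subseteq> {y + zmult c (g (Suc j)) | y c. y \<in> chain_step H g j}"
  proof
    fix x assume "x \<in> chain_step H g (Suc j)"
    then obtain h c where h: "h \<in> H" "x = h + (\<Sum>i\<in>{1..Suc j}. zmult (c i) (g i))"
      unfolding chain_step_def by blast
    then have "x = (h + (\<Sum>i\<in>{1..j}. zmult (c i) (g i))) + zmult (c (Suc j)) (g (Suc j))"
      by (simp add: add.assoc)
    moreover have "h + (\<Sum>i\<in>{1..j}. zmult (c i) (g i)) \<in> chain_step H g j"
      unfolding chain_step_def using h by blast
    ultimately show "x \<in> {y + zmult c (g (Suc j)) | y c. y \<in> chain_step H g j}" by blast
  qed
next
  show "{y + zmult c (g (Suc j)) | y c. y \<in> chain_step H g j} \<subseteq> chain_step H g (Suc j)"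
  proof
    fix x assume "x \<in> {y + zmult c (g (Suc j)) | y c. y \<in> chain_step H g j}"
    then obtain y a where "y \<in> chain_step H g j" "x = y + zmult a (g (Suc j))" by blast
    then obtain h c where h: "h \<in> H" "x = h + (\<Sum>i\<in>{1..j}. zmult (c i) (g i)) + zmult a (g (Suc j))"
      unfolding chain_step_def by blast
    define c' where "c' = c(Suc j := a)"
    have "(\<Sum>i\<in>{1..j}. zmult (c' i) (g i)) = (\<Sum>i\<in>{1..j}. zmult (c i) (g i))"
      by (rule sum.cong) (auto simp: c'_def)
    then have "x = h + (\<Sum>i\<in>{1..Suc j}. zmult (c' i) (g i))" using h by (simp add: c'_def add.assoc)
    then show "x \<in> chain_step H g (Suc j)" unfolding chain_step_def using h by blast
  qed
qed

lemma chain_sub: "subgroup_of H \<Longrightarrow> subgroup_of (chain_step H g j)"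
  by (induction j) (simp_all only: chain_step_0 chain_step_Suc sub_ext)

lemma chain_H: "subgroup_of H \<Longrightarrow> H \<subseteq> chain_step H g j"
proof (induction j)
  case 0 then show ?case by (simp add: chain_step_0)
next
  case (Suc j)
  have "chain_step H g j \<subseteq> chain_step H g (Suc j)" unfolding chain_step_Suc
    by (force intro: exI[of _ 0])
  with Suc show ?case by blast
qed




lemma step_EU:
  assumes H: "subgroup_of H" and odd: "\<forall>x. has_odd_order_mod H x"
  shows "(\<forall>c. \<exists>r. \<bar>r\<bar> \<le> int (chain_k H g (Suc j)) \<and> zmult (c - r) (g (Suc j)) \<in> chain_step H g j) \<and>
         (\<forall>r r'. \<bar>r\<bar> \<le> int (chain_k H g (Suc j)) \<longrightarrow> \<bar>r'\<bar> \<le> int (chain_k H g (Suc j)) \<longrightarrow>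
             zmult (r - r') (g (Suc j)) \<in> chain_step H g j \<longrightarrow> r = r')"
proof -
  let ?K = "chain_step H g j" and ?a = "g (Suc j)"
  have Ksub: "subgroup_of ?K" using chain_sub[OF H] .
  have HK: "H \<subseteq> ?K" using chain_H[OF H] .
  define oo where "oo = (LEAST n::nat. n > 0 \<and> zmult (int n) ?a \<in> H)"
  have ex: "\<exists>n::nat. n > 0 \<and> zmult (int n) ?a \<in> H" and oodd: "odd oo"
    using odd unfolding has_odd_order_mod_def oo_def by auto
  from LeastI_ex[OF ex] have o0: "oo > 0" and oH: "zmult (int oo) ?a \<in> H" unfolding oo_def by auto
  define m where "m = (LEAST n::nat. n > 0 \<and> zmult (int n) ?a \<in> ?K)"
  note kk = key[OF Ksub o0, of ?a, folded m_def]
  have oK: "zmult (int oo) ?a \<in> ?K" using oH HK by blast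
  have m0: "m > 0" and mK: "zmult (int m) ?a \<in> ?K" and dv: "\<forall>c. zmult c ?a \<in> ?K \<longrightarrow> int m dvd c"
    and mo: "m dvd oo" and idx: "index_in {y + zmult c ?a | y c. y \<in> ?K} ?K = m"
    using kk oK by auto
  have ck: "chain_k H g (Suc j) = (m - 1) div 2"
    using idx unfolding chain_k_def chain_step_Suc[of H g j, symmetric] by simp
  have "odd m" using mo oodd by (metis dvd_trans)
  then obtain t where t: "m = 2 * t + 1" by (metis oddE)
  then have mk: "int m = 2 * int (chain_k H g (Suc j)) + 1" using ck by simp
  define k where "k = int (chain_k H g (Suc j))"
  have mk': "int m = 2 * k + 1" using mk k_def by simp
  have E: "\<exists>r. \<bar>r\<bar> \<le> k \<and> zmult (c - r) ?a \<in> ?K" for c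
  proof -
    define r0 where "r0 = c mod int m"
    have r0: "0 \<le> r0" "r0 < int m" using m0 by (auto simp: r0_def)
    have mul: "zmult (q * int m) ?a \<in> ?K" for q
      using sub_zmult[OF Ksub mK] by (simp add: zmult_mult)
    show ?thesis
    proof (cases "r0 \<le> k")
      case True
      have "c - r0 = (c div int m) * int m" by (simp add: r0_def minus_mod_eq_div_mult)
      then show ?thesis using True r0 mul by (intro exI[of _ r0]) auto
    next
      case False
      have "c - (r0 - int m) = (c div int m + 1) * int m" by (simp add: r0_def minus_mod_eq_div_mult algebra_simps)
      then show ?thesis using False r0 mul mk' by (intro exI[of _ "r0 - int m"]) auto
    qed
  qed
  have U: "r = r'" if "\<bar>r\<bar> \<le> k" "\<bar>r'\<bar> \<le> k" "zmult (r - r') ?a \<in> ?K" for r r'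
  proof (rule ccontr)
    assume "r \<noteq> r'"
    moreover have "int m dvd (r - r')" using dv that(3) by blast
    ultimately have "\<bar>int m\<bar> \<le> \<bar>r - r'\<bar>" using dvd_imp_le_int[of "r - r'" "int m"] by simp
    then show False using that mk' by simp
  qed
  show ?thesis using E U unfolding k_def by blast
qed

lemma sum_ext:
  fixes a b :: nat and r :: "nat \<Rightarrow> int"
  assumes "\<forall>i>a. r i = 0" "a \<le> b"
  shows "(\<Sum>i\<in>{1..b}. zmult (r i) (g i)) = (\<Sum>i\<in>{1..a}. zmult (r i) (g i))"
  by (rule sum.mono_neutral_right) (use assms in auto)

lemma sum_ext2:
  fixes a b :: nat and r :: "nat \<Rightarrow> int"
  assumes "\<forall>i>a. r i = 0" "\<forall>i>b. r i = 0"
  shows "(\<Sum>i\<in>{1..b}. zmult (r i) (g i)) = (\<Sum>i\<in>{1..a}. zmult (r i) (g i))"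
proof (cases "a \<le> b")
  case True then show ?thesis using sum_ext[OF assms(1)] by blast
next
  case False then show ?thesis using sum_ext[OF assms(2), of a g] by simp
qed

lemma existence:
  assumes H: "subgroup_of H" and odd: "\<forall>x. has_odd_order_mod H x"
  shows "\<forall>x\<in>chain_step H g j. \<exists>h r. h \<in> H \<and> r 0 = 0 \<and> (\<forall>i\<ge>1. \<bar>r i\<bar> \<le> int (chain_k H g i)) \<and>
     (\<forall>i>j. r i = 0) \<and> x = h + (\<Sum>i\<in>{1..j}. zmult (r i) (g i))"
proof (induction j)
  case 0
  show ?case
  proof
    fix x assume "x \<in> chain_step H g 0"
    then have "x \<in> H" by (simp add: chain_step_0)
    then show "\<exists>h r. h \<in> H \<and> r 0 = 0 \<and> (\<forall>i\<ge>1. \<bar>r i\<bar> \<le> int (chain_k H g i)) \<and>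
     (\<forall>i>0. r i = 0) \<and> x = h + (\<Sum>i\<in>{1..0}. zmult (r i) (g i))"
      by (intro exI[of _ x] exI[of _ "\<lambda>_. 0"]) auto
  qed
next
  case (Suc j)
  show ?case
  proof
    fix x assume "x \<in> chain_step H g (Suc j)"
    then obtain y c where y: "y \<in> chain_step H g j" and x: "x = y + zmult c (g (Suc j))"
      unfolding chain_step_Suc by blast
    obtain r' where r': "\<bar>r'\<bar> \<le> int (chain_k H g (Suc j))" "zmult (c - r') (g (Suc j)) \<in> chain_step H g j"
      using step_EU[OF H odd, of g j] by blast
    have "y + zmult (c - r') (g (Suc j)) \<in> chain_step H g j"
      using chain_sub[OF H, of g j] y r'(2) unfolding subgroup_of_def by blast
    then obtain h r where hr: "h \<in> H" "r 0 = 0" "\<forall>i\<ge>1. \<bar>r i\<bar> \<le> int (chain_k H g i)"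
      "\<forall>i>j. r i = 0" "y + zmult (c - r') (g (Suc j)) = h + (\<Sum>i\<in>{1..j}. zmult (r i) (g i))"
      using Suc.IH by blast
    define r2 where "r2 = r(Suc j := r')"
    have s: "(\<Sum>i\<in>{1..j}. zmult (r2 i) (g i)) = (\<Sum>i\<in>{1..j}. zmult (r i) (g i))"
      by (rule sum.cong) (auto simp: r2_def)
    have "x = (y + zmult (c - r') (g (Suc j))) + zmult r' (g (Suc j))"
      using x by (simp add: zmult_diff)
    also have "\<dots> = h + (\<Sum>i\<in>{1..Suc j}. zmult (r2 i) (g i))"
      using hr(5) s by (simp add: r2_def add.assoc)
    finally have "x = h + (\<Sum>i\<in>{1..Suc j}. zmult (r2 i) (g i))" .
    moreover have "r2 0 = 0" using hr(2) by (simp add: r2_def)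
    moreover have "\<forall>i\<ge>1. \<bar>r2 i\<bar> \<le> int (chain_k H g i)" using hr(3) r'(1) by (simp add: r2_def)
    moreover have "\<forall>i>Suc j. r2 i = 0" using hr(4) by (simp add: r2_def)
    ultimately show "\<exists>h r. h \<in> H \<and> r 0 = 0 \<and> (\<forall>i\<ge>1. \<bar>r i\<bar> \<le> int (chain_k H g i)) \<and>
     (\<forall>i>Suc j. r i = 0) \<and> x = h + (\<Sum>i\<in>{1..Suc j}. zmult (r i) (g i))"
      using hr(1) by blast
  qed
qed

lemma uniqueness:
  assumes H: "subgroup_of H" and odd: "\<forall>x. has_odd_order_mod H x"
  shows "h \<in> H \<Longrightarrow> h' \<in> H \<Longrightarrow> \<forall>i\<ge>1. \<bar>r i\<bar> \<le> int (chain_k H g i) \<Longrightarrow>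
    \<forall>i\<ge>1. \<bar>r' i\<bar> \<le> int (chain_k H g i) \<Longrightarrow>
    h + (\<Sum>i\<in>{1..j}. zmult (r i) (g i)) = h' + (\<Sum>i\<in>{1..j}. zmult (r' i) (g i)) \<Longrightarrow>
    h = h' \<and> (\<forall>i\<in>{1..j}. r i = r' i)"
proof (induction j)
  case 0 then show ?case by simp
next
  case (Suc j)
  let ?a = "g (Suc j)"
  define A where "A = h + (\<Sum>i\<in>{1..j}. zmult (r i) (g i))"
  define B where "B = h' + (\<Sum>i\<in>{1..j}. zmult (r' i) (g i))"
  have AK: "A \<in> chain_step H g j" unfolding A_def chain_step_def using Suc.prems(1) by blast
  have BK: "B \<in> chain_step H g j" unfolding B_def chain_step_def using Suc.prems(2) by blast
  have eq: "A + zmult (r (Suc j)) ?a = B + zmult (r' (Suc j)) ?a"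
    using Suc.prems(5) unfolding A_def B_def by (simp add: add.assoc)
  then have "zmult (r (Suc j) - r' (Suc j)) ?a = B - A"
    by (simp add: zmult_diff algebra_simps)
  then have "zmult (r (Suc j) - r' (Suc j)) ?a \<in> chain_step H g j"
    using sub_diff[OF chain_sub[OF H] BK AK] by simp
  then have rs: "r (Suc j) = r' (Suc j)"
    using step_EU[OF H odd, of g j] Suc.prems(3,4) by auto
  then have "A = B" using eq by simp
  then have "h = h' \<and> (\<forall>i\<in>{1..j}. r i = r' i)"
    using Suc.IH Suc.prems(1-4) unfolding A_def B_def by blast
  then show ?case using rs by (auto simp: le_Suc_eq)
qed

theorem mainTheorem13:
  fixes H :: "'a::{ab_group_add, countable} set" and g :: "nat \<Rightarrow> 'a"
  assumes "subgroup_of H" and "H \<noteq> UNIV"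
    and "\<forall>x. has_odd_order_mod H x"
    and "one_step_chain H g"
  shows "\<forall>x. \<exists>!(h, r). h \<in> H \<and> r 0 = 0 \<and>
            (\<forall>i\<ge>1. \<bar>r i\<bar> \<le> int (chain_k H g i)) \<and>
            (\<exists>i0. \<forall>i>i0. r i = 0) \<and>
            (\<forall>i0. (\<forall>i>i0. r i = 0) \<longrightarrow> x = h + (\<Sum>i\<in>{1..i0}. zmult (r i) (g i)))"
proof
  fix x
  let ?P = "\<lambda>h r. h \<in> H \<and> r 0 = 0 \<and>
            (\<forall>i\<ge>1. \<bar>r i\<bar> \<le> int (chain_k H g i)) \<and>
            (\<exists>i0. \<forall>i>i0. r i = 0) \<and>
            (\<forall>i0. (\<forall>i>i0. r i = 0) \<longrightarrow> x = h + (\<Sum>i\<in>{1..i0}. zmult (r i) (g i)))"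
  from assms(4) obtain j where "x \<in> chain_step H g j" unfolding one_step_chain_def by blast
  then obtain h r where hr: "h \<in> H" "r 0 = 0" "\<forall>i\<ge>1. \<bar>r i\<bar> \<le> int (chain_k H g i)"
     "\<forall>i>j. r i = 0" "x = h + (\<Sum>i\<in>{1..j}. zmult (r i) (g i))"
    using existence[OF assms(1,3), of g j] by blast
  have Phr: "?P h r"
  proof (intro conjI allI impI)
    fix i0 assume "\<forall>i>i0. r i = 0"
    then show "x = h + (\<Sum>i\<in>{1..i0}. zmult (r i) (g i))" using hr(5) sum_ext2[OF hr(4)] by metis
  qed (use hr in auto)
  show "\<exists>!(h, r). ?P h r"
  proof (rule ex1I[of _ "(h, r)"])
    show "case (h, r) of (h, r) \<Rightarrow> ?P h r" using Phr by simp
  next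
    fix p assume "case p of (h, r) \<Rightarrow> ?P h r"
    then obtain h' r' where p: "p = (h', r')" and P': "?P h' r'" by (cases p) auto
    then obtain i1 where i1: "\<forall>i>i1. r' i = 0" by blast
    define N where "N = max j i1"
    have z: "\<forall>i>N. r i = 0" "\<forall>i>N. r' i = 0" using hr(4) i1 by (auto simp: N_def)
    have "x = h + (\<Sum>i\<in>{1..N}. zmult (r i) (g i))" using Phr z(1) by blast
    moreover have "x = h' + (\<Sum>i\<in>{1..N}. zmult (r' i) (g i))" using P' z(2) by blast
    ultimately have "h = h' \<and> (\<forall>i\<in>{1..N}. r i = r' i)"
      using uniqueness[OF assms(1,3), where j=N] hr(1,3) P' by auto
    moreover have "r i = r' i" if "i \<notin> {1..N}" for i
    proof (cases "i = 0")
      case True then show ?thesis using hr(2) P' by simp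
    next
      case False then have "i > N" using that by auto
      then show ?thesis using z by simp
    qed
    ultimately have "h' = h" "r' = r" by (auto intro!: ext) (metis atLeastAtMost_iff)
    then show "p = (h, r)" using p by simp
  qed
qed


end
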